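(* Let $X,Y$ be random variables on finite sets $\mathcal{X},\mathcal{Y}$ with joint pmf $P_{XY}$. Let $\lambda_{\min}<\lambda_{\max}$ and $\Delta>0$, and set $N=(\lambda_{\max}-\lambda_{\min})/\Delta$. Let $0\le\epsilon<1$ and $0<\eta<1-\epsilon$. Then for every $\gamma>0$, \[ L_\epsilon(X,Y)\ge \gamma+3\log\Big(P_\gamma-\epsilon-P_{XY}(\mathcal{T}_0)-\frac1N\Big)_+ +\log(1-2\eta)-\Delta-6\log N-4\log\frac1\eta-1, \] where $P_\gamma:=P_{XY}\big(h(X\triangle Y)>\gamma\big)$.
   Context: Logarithms are to base 2, $(a)_+=\max\{a,0\}$, and $\log 0=-\infty$. The sum conditional entropy density is $h(X\triangle Y)=-\log P_{X|Y}(X|Y)-\log P_{Y|X}(Y|X)$. The set $\mathcal{T}_0=\{(x,y):-\log P_{XY}(x,y)\ge\lambda_{\max}\text{ or }-\log P_{XY}(x,y)<\lambda_{\min}\}$. Setting of the protocol. Party 1 observes $X$ and party 2 observes $Y$. They may use private randomness $U_{\mathcal X}$ and $U_{\mathcal Y}$ and shared randomness $U$; these are mutually independent and independent of $(X,Y)$. Tree protocol. A tree protocol is a binary tree whose internal vertices are labelled 1 or 2. At a vertex labelled $i$, party $i$ sends a bit that is a function of its observation, its private randomness and $U$. The protocol moves to the left or right child according to that bit and stops at a leaf. The transcript $\Pi$ is the sequence of bits sent, and the length of the protocol is the depth of the tree. Data exchange. A protocol attains $\epsilon$-data exchange if there are functions $\hat Y$ of $(X,\Pi,U_{\mathcal X},U)$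 and $\hat X$ of $(Y,\Pi,U_{\mathcal Y},U)$ with $\Pr(\hat X=X,\hat Y=Y)\ge1-\epsilon$. $L_\epsilon(X,Y)$ is the infimum of the lengths of protocols attaining $\epsilon$-data exchange. *)

theory Defs
  imports "HOL-Probability.Probability"
begin

(* Tree protocols. 'a is the view of party 1 (observation, private randomness,
   shared randomness), 'b the view of party 2. At a vertex labelled i, party i
   sends the bit given by the vertex function applied to its view; bit False
   moves to the left child, True to the right child. *)
datatype ('a, 'b) ptree =
    Leaf
  | Node1 "'a \<Rightarrow> bool" "('a, 'b) ptree" "('a, 'b) ptree"
  | Node2 "'b \<Rightarrow> bool" "('a, 'b) ptree" "('a, 'b) ptree"

fun ptree_depth :: "('a, 'b) ptree \<Rightarrow> nat" where
  "ptree_depth Leaf = 0"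
| "ptree_depth (Node1 f l r) = Suc (max (ptree_depth l) (ptree_depth r))"
| "ptree_depth (Node2 g l r) = Suc (max (ptree_depth l) (ptree_depth r))"

fun transcript :: "('a, 'b) ptree \<Rightarrow> 'a \<Rightarrow> 'b \<Rightarrow> bool list" where
  "transcript Leaf a b = []"
| "transcript (Node1 f l r) a b = f a # transcript (if f a then r else l) a b"
| "transcript (Node2 g l r) a b = g b # transcript (if g b then r else l) a b"

fun ptree_measurable :: "'a measure \<Rightarrow> 'b measure \<Rightarrow> ('a, 'b) ptree \<Rightarrow> bool" where
  "ptree_measurable MA MB Leaf = True"
| "ptree_measurable MA MB (Node1 f l r) =
     (f \<in> MA \<rightarrow>\<^sub>M count_space UNIV \<and> ptree_measurable MA MB l \<and> ptree_measurable MA MB r)"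
| "ptree_measurable MA MB (Node2 g l r) =
     (g \<in> MB \<rightarrow>\<^sub>M count_space UNIV \<and> ptree_measurable MA MB l \<and> ptree_measurable MA MB r)"

(* sigma-algebra of the view (X, U_X, U) of party 1, resp. (Y, U_Y, U) of party 2 *)
definition view_space :: "'u measure \<Rightarrow> 'v measure \<Rightarrow> ('x \<times> 'u \<times> 'v) measure" where
  "view_space MP MU = count_space UNIV \<Otimes>\<^sub>M (MP \<Otimes>\<^sub>M MU)"

(* joint space of ((X,Y),(U_X,(U_Y,U))): all four mutually independent *)
definition protocol_space ::
  "('x \<times> 'y) pmf \<Rightarrow> 'ux measure \<Rightarrow> 'uy measure \<Rightarrow> 'u measure
     \<Rightarrow> (('x \<times> 'y) \<times> ('ux \<times> 'uy \<times> 'u)) measure" where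
  "protocol_space P MX MY MU = measure_pmf P \<Otimes>\<^sub>M (MX \<Otimes>\<^sub>M (MY \<Otimes>\<^sub>M MU))"

definition attains_data_exchange ::
  "('x \<times> 'y) pmf \<Rightarrow> 'ux measure \<Rightarrow> 'uy measure \<Rightarrow> 'u measure
     \<Rightarrow> ('x \<times> 'ux \<times> 'u, 'y \<times> 'uy \<times> 'u) ptree \<Rightarrow> real \<Rightarrow> bool" where
  "attains_data_exchange P MX MY MU t \<epsilon> \<longleftrightarrow>
     ptree_measurable (view_space MX MU) (view_space MY MU) t \<and>
     (\<exists>(Yhat :: bool list \<Rightarrow> 'x \<times> 'ux \<times> 'u \<Rightarrow> 'y) (Xhat :: bool list \<Rightarrow> 'y \<times> 'uy \<times> 'u \<Rightarrow> 'x).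
        (\<forall>tr. Yhat tr \<in> view_space MX MU \<rightarrow>\<^sub>M count_space UNIV) \<and>
        (\<forall>tr. Xhat tr \<in> view_space MY MU \<rightarrow>\<^sub>M count_space UNIV) \<and>
        measure (protocol_space P MX MY MU)
          {\<omega> \<in> space (protocol_space P MX MY MU).
             case \<omega> of ((x, y), (ux, uy, u)) \<Rightarrow>
               Xhat (transcript t (x, ux, u) (y, uy, u)) (y, uy, u) = x \<and>
               Yhat (transcript t (x, ux, u) (y, uy, u)) (x, ux, u) = y}
          \<ge> 1 - \<epsilon>)"

(* L_epsilon(X,Y), with private/shared randomness ranging over probability spaces
   on the types 'ux, 'uy, 'u (the theorem is stated for all such types).
   Infimum of the empty set is +infinity. *)
definition L_eps :: "('x \<times> 'y) pmf \<Rightarrow> real \<Rightarrow> ('ux \<times> 'uy \<times> 'u) itself \<Rightarrow> ereal" where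
  "L_eps P \<epsilon> (uty :: ('ux \<times> 'uy \<times> 'u) itself) =
     Inf {ereal (real (ptree_depth t)) | t (MX :: 'ux measure) (MY :: 'uy measure) (MU :: 'u measure).
            prob_space MX \<and> prob_space MY \<and> prob_space MU \<and>
            attains_data_exchange P MX MY MU t \<epsilon>}"

definition log2e :: "real \<Rightarrow> ereal" where
  "log2e x = (if x > 0 then ereal (log 2 x) else -\<infinity>)"

definition h_sum :: "('x \<times> 'y) pmf \<Rightarrow> 'x \<Rightarrow> 'y \<Rightarrow> real" where
  "h_sum P x y =
     - log 2 (pmf P (x, y) / pmf (map_pmf snd P) y)
     - log 2 (pmf P (x, y) / pmf (map_pmf fst P) x)"

definition T0 :: "('x \<times> 'y) pmf \<Rightarrow> real \<Rightarrow> real \<Rightarrow> ('x \<times> 'y) set" where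
  "T0 P lmin lmax = {(x, y). - log 2 (pmf P (x, y)) \<ge> lmax \<or> - log 2 (pmf P (x, y)) < lmin}"

end

theory Submission
  imports Defs
begin

fun leaves :: "('a, 'b) ptree \<Rightarrow> bool list set" where
  "leaves Leaf = {[]}"
| "leaves (Node1 f l r) = Cons False ` leaves l \<union> Cons True ` leaves r"
| "leaves (Node2 g l r) = Cons False ` leaves l \<union> Cons True ` leaves r"

lemma transcript_in_leaves: "transcript t a b \<in> leaves t"
  by (induction t a b rule: transcript.induct) auto

lemma finite_leaves: "finite (leaves t)"
  by (induction t) auto

lemma card_leaves: "card (leaves t) \<le> 2 ^ ptree_depth t"
proof (induction t)
  case Leaf
  then show ?case by simp
next
  case (Node1 f l r)
  have "card (leaves (Node1 f l r)) \<le> card (Cons False ` leaves l) + card (Cons True ` leaves r)"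
    by (simp add: card_Un_le)
  also have "\<dots> \<le> card (leaves l) + card (leaves r)"
    by (intro add_mono card_image_le finite_leaves)
  also have "\<dots> \<le> 2 ^ ptree_depth l + 2 ^ ptree_depth r" using Node1 by simp
  also have "\<dots> \<le> 2 ^ max (ptree_depth l) (ptree_depth r) + 2 ^ max (ptree_depth l) (ptree_depth r)"
    by (intro add_mono power_increasing) auto
  finally show ?case by simp
next
  case (Node2 f l r)
  have "card (leaves (Node2 f l r)) \<le> card (Cons False ` leaves l) + card (Cons True ` leaves r)"
    by (simp add: card_Un_le)
  also have "\<dots> \<le> card (leaves l) + card (leaves r)"
    by (intro add_mono card_image_le finite_leaves)
  also have "\<dots> \<le> 2 ^ ptree_depth l + 2 ^ ptree_depth r" using Node2 by simp
  also have "\<dots> \<le> 2 ^ max (ptree_depth l) (ptree_depth r) + 2 ^ max (ptree_depth l) (ptree_depth r)"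
    by (intro add_mono power_increasing) auto
  finally show ?case by simp
qed

lemma transcript_mix:
  "transcript t a b = transcript t a' b' \<Longrightarrow> transcript t a b' = transcript t a b"
proof (induction t arbitrary: a b a' b')
  case Leaf
  then show ?case by simp
next
  case (Node1 f l r)
  show ?case
  proof (cases "f a")
    case True
    with Node1.prems have fa: "f a'" and tr: "transcript r a b = transcript r a' b'"
      by (auto split: if_splits)
    have "transcript r a b' = transcript r a b" by (rule Node1.IH(2)[OF tr])
    with True show ?thesis by simp
  next
    case False
    with Node1.prems have fa: "\<not> f a'" and tr: "transcript l a b = transcript l a' b'"
      by (auto split: if_splits)
    have "transcript l a b' = transcript l a b" by (rule Node1.IH(1)[OF tr])
    with False show ?thesis by simp
  qed
next
  case (Node2 g l r)
  show ?case
  proof (cases "g b")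
    case True
    with Node2.prems have fa: "g b'" and tr: "transcript r a b = transcript r a' b'"
      by (auto split: if_splits)
    have "transcript r a b' = transcript r a b" by (rule Node2.IH(2)[OF tr])
    with True fa show ?thesis by simp
  next
    case False
    with Node2.prems have fa: "\<not> g b'" and tr: "transcript l a b = transcript l a' b'"
      by (auto split: if_splits)
    have "transcript l a b' = transcript l a b" by (rule Node2.IH(1)[OF tr])
    with False fa show ?thesis by simp
  qed
qed

lemma sum_sqrt_CS:
  fixes u v :: "'i \<Rightarrow> real"
  assumes "\<And>i. i \<in> I \<Longrightarrow> u i \<ge> 0" "\<And>i. i \<in> I \<Longrightarrow> v i \<ge> 0"
  shows "(\<Sum>i\<in>I. sqrt (u i) * sqrt (v i)) \<le> sqrt (\<Sum>i\<in>I. u i) * sqrt (\<Sum>i\<in>I. v i)"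
proof -
  have "(\<Sum>i\<in>I. sqrt (u i) * sqrt (v i))\<^sup>2 \<le> (\<Sum>i\<in>I. (sqrt (u i))\<^sup>2) * (\<Sum>i\<in>I. (sqrt (v i))\<^sup>2)"
    by (rule Cauchy_Schwarz_ineq_sum)
  also have "\<dots> = (\<Sum>i\<in>I. u i) * (\<Sum>i\<in>I. v i)"
    using assms by (simp cong: sum.cong)
  finally have "(\<Sum>i\<in>I. sqrt (u i) * sqrt (v i))\<^sup>2 \<le> (sqrt (\<Sum>i\<in>I. u i) * sqrt (\<Sum>i\<in>I. v i))\<^sup>2"
    using assms by (simp add: power_mult_distrib sum_nonneg)
  moreover have "0 \<le> sqrt (\<Sum>i\<in>I. u i) * sqrt (\<Sum>i\<in>I. v i)"
    using assms by (simp add: sum_nonneg)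
  ultimately show ?thesis using power2_le_imp_le by blast
qed



lemma core:
  fixes P :: "('x::finite \<times> 'y::finite) pmf" and \<tau> :: "'x \<Rightarrow> 'y \<Rightarrow> 'k"
  assumes finK: "finite K" and inK: "\<And>x y. \<tau> x y \<in> K"
    and mix: "\<And>x y x' y'. \<tau> x y = \<tau> x' y' \<Longrightarrow> \<tau> x y' = \<tau> x y"
    and match: "\<And>x y x' y'. (x,y)\<in>C \<Longrightarrow> (x',y')\<in>C \<Longrightarrow> \<tau> x y = \<tau> x' y' \<Longrightarrow> (x = x' \<longleftrightarrow> y = y')"
  shows "(\<Sum>(x,y)\<in>C. sqrt (pmf (map_pmf fst P) x) * sqrt (pmf (map_pmf snd P) y)) \<le> sqrt (card K)"
proof -
  define px where "px = pmf (map_pmf fst P)"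
  define py where "py = pmf (map_pmf snd P)"
  define A where "A k = {x. \<exists>y. \<tau> x y = k}" for k
  define B where "B k = {y. \<exists>x. \<tau> x y = k}" for k
  define Ck where "Ck k = {z. z \<in> C \<and> case_prod \<tau> z = k}" for k
  have px0: "px x \<ge> 0" for x by (simp add: px_def)
  have py0: "py y \<ge> 0" for y by (simp add: py_def)
  have "(\<Sum>(x,y)\<in>C. sqrt (px x) * sqrt (py y))
      = (\<Sum>k\<in>K. \<Sum>z\<in>Ck k. sqrt (px (fst z)) * sqrt (py (snd z)))"
    unfolding Ck_def
    by (subst sum.group[symmetric, where g = "case_prod \<tau>" and T = K]) 
       (auto simp: finK inK case_prod_beta)
  also have "\<dots> \<le> (\<Sum>k\<in>K. sqrt (sum px (A k)) * sqrt (sum py (B k)))"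
  proof (rule sum_mono)
    fix k assume "k \<in> K"
    have cs: "(\<Sum>z\<in>Ck k. sqrt (px (fst z)) * sqrt (py (snd z)))
        \<le> sqrt (\<Sum>z\<in>Ck k. px (fst z)) * sqrt (\<Sum>z\<in>Ck k. py (snd z))"
      by (rule sum_sqrt_CS) (auto simp: px0 py0)
    have e1: "(\<Sum>z\<in>Ck k. px (fst z)) = sum px (fst ` Ck k)"
    proof (subst sum.reindex)
      show "inj_on fst (Ck k)"
      proof (rule inj_onI)
        fix z z' assume zz: "z \<in> Ck k" "z' \<in> Ck k" "fst z = fst z'"
        obtain x y x' y' where zs: "z = (x,y)" "z' = (x',y')" by (cases z, cases z')
        have "(x,y) \<in> C" "(x',y') \<in> C" "\<tau> x y = \<tau> x' y'" using zz unfolding zs Ck_def by auto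
        from match[OF this] zz(3) show "z = z'" unfolding zs by simp
      qed
    qed simp
    have l1: "sum px (fst ` Ck k) \<le> sum px (A k)"
      by (rule sum_mono2) (auto simp: A_def Ck_def px0)
    have e2: "(\<Sum>z\<in>Ck k. py (snd z)) = sum py (snd ` Ck k)"
    proof (subst sum.reindex)
      show "inj_on snd (Ck k)"
      proof (rule inj_onI)
        fix z z' assume zz: "z \<in> Ck k" "z' \<in> Ck k" "snd z = snd z'"
        obtain x y x' y' where zs: "z = (x,y)" "z' = (x',y')" by (cases z, cases z')
        have "(x,y) \<in> C" "(x',y') \<in> C" "\<tau> x y = \<tau> x' y'" using zz unfolding zs Ck_def by auto
        from match[OF this] zz(3) show "z = z'" unfolding zs by simp
      qed
    qed simp
    have l2: "sum py (snd ` Ck k) \<le> sum py (B k)"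
      by (rule sum_mono2) (auto simp: B_def Ck_def py0)
    have s1: "sqrt (\<Sum>z\<in>Ck k. px (fst z)) \<le> sqrt (sum px (A k))"
      using e1 l1 by simp
    have s2: "sqrt (\<Sum>z\<in>Ck k. py (snd z)) \<le> sqrt (sum py (B k))"
      using e2 l2 by simp
    have "sqrt (\<Sum>z\<in>Ck k. px (fst z)) * sqrt (\<Sum>z\<in>Ck k. py (snd z)) \<le> sqrt (sum px (A k)) * sqrt (sum py (B k))"
      by (rule mult_mono[OF s1 s2]) (auto intro: sum_nonneg simp: px0 py0)
    with cs show "(\<Sum>z\<in>Ck k. sqrt (px (fst z)) * sqrt (py (snd z)))
        \<le> sqrt (sum px (A k)) * sqrt (sum py (B k))" by linarith
  qed
  also have "\<dots> = (\<Sum>k\<in>K. sqrt 1 * sqrt (sum px (A k) * sum py (B k)))"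
    by (simp add: real_sqrt_mult)
  also have "\<dots> \<le> sqrt (\<Sum>k\<in>K. 1) * sqrt (\<Sum>k\<in>K. sum px (A k) * sum py (B k))"
    by (rule sum_sqrt_CS) (auto intro!: mult_nonneg_nonneg sum_nonneg simp: px0 py0)
  finally have main: "(\<Sum>(x,y)\<in>C. sqrt (px x) * sqrt (py y)) \<le> sqrt (\<Sum>k\<in>K. 1) * sqrt (\<Sum>k\<in>K. sum px (A k) * sum py (B k))" .
  have one: "(\<Sum>k\<in>K. sum px (A k) * sum py (B k)) = 1"
  proof -
    have rect: "A k \<times> B k = {z. case_prod \<tau> z = k}" for k
      unfolding A_def B_def by (auto, metis mix)
    have "(\<Sum>k\<in>K. sum px (A k) * sum py (B k)) = (\<Sum>k\<in>K. \<Sum>z\<in>A k \<times> B k. px (fst z) * py (snd z))"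
      by (simp add: sum_product sum.cartesian_product case_prod_beta)
    also have "\<dots> = (\<Sum>k\<in>K. \<Sum>z\<in>{z\<in>UNIV. case_prod \<tau> z = k}. px (fst z) * py (snd z))"
      by (simp add: rect)
    also have "\<dots> = (\<Sum>z\<in>UNIV. px (fst z) * py (snd z))"
      by (rule sum.group) (auto simp: finK inK)
    also have "\<dots> = (\<Sum>(x,y)\<in>UNIV\<times>UNIV. px x * py y)"
      by (simp add: case_prod_beta)
    also have "\<dots> = (\<Sum>x\<in>UNIV. \<Sum>y\<in>UNIV. px x * py y)"
      by (rule sum.cartesian_product[symmetric])
    also have "\<dots> = (\<Sum>x\<in>UNIV. px x) * (\<Sum>y\<in>UNIV. py y)"
      by (simp add: sum_product)
    also have "\<dots> = 1"
      unfolding px_def py_def by (simp add: sum_pmf_eq_1)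
    finally show ?thesis .
  qed
  have "(\<Sum>(x,y)\<in>C. sqrt (px x) * sqrt (py y)) \<le> sqrt (card K)"
    using main unfolding one by simp
  thus ?thesis by (simp add: px_def py_def)
qed



lemma pmf_le_marg1: "pmf P (x, y) \<le> pmf (map_pmf fst P) x"
  unfolding pmf_map by (simp add: measure_pmf_single[symmetric] measure_pmf.finite_measure_mono)

lemma pmf_le_marg2: "pmf P (x, y) \<le> pmf (map_pmf snd P) y"
  unfolding pmf_map by (simp add: measure_pmf_single[symmetric] measure_pmf.finite_measure_mono)

lemma pointwise:
  assumes "h_sum P x y > \<gamma>"
  shows "pmf P (x,y) \<le> 2 powr (-\<gamma>/2) * (sqrt (pmf (map_pmf fst P) x) * sqrt (pmf (map_pmf snd P) y))"
proof (cases "pmf P (x,y) = 0")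
  case True then show ?thesis by simp
next
  case False
  define p where "p = pmf P (x,y)"
  define a where "a = pmf (map_pmf fst P) x"
  define b where "b = pmf (map_pmf snd P) y"
  have p: "p > 0" using False by (simp add: p_def order_le_neq_trans[OF pmf_nonneg])
  have a: "a \<ge> p" unfolding a_def p_def by (rule pmf_le_marg1)
  have b: "b \<ge> p" unfolding b_def p_def by (rule pmf_le_marg2)
  have ap: "a > 0" "b > 0" using a b p by auto
  have "- log 2 (p / b) - log 2 (p / a) > \<gamma>" using assms by (simp add: h_sum_def p_def a_def b_def)
  hence "log 2 (p*p / (a*b)) < -\<gamma>" using p ap by (simp add: log_divide log_mult)
  hence "p*p/(a*b) < 2 powr (-\<gamma>)" using p ap
  proof -
    have q: "p*p/(a*b) > 0" using p ap by simp
    have "p*p/(a*b) = 2 powr (log 2 (p*p/(a*b)))" using q by simp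
    also have "\<dots> < 2 powr (-\<gamma>)" by (rule powr_less_mono) (use \<open>log 2 (p*p / (a*b)) < -\<gamma>\<close> in auto)
    finally show ?thesis .
  qed
  hence "p*p < 2 powr (-\<gamma>) * (a*b)" using ap by (simp add: divide_less_eq)
  hence "sqrt (p*p) < sqrt (2 powr (-\<gamma>) * (a*b))" by (rule real_sqrt_less_mono)
  also have "sqrt (2 powr (-\<gamma>) * (a*b)) = 2 powr (-\<gamma>/2) * (sqrt a * sqrt b)"
  proof -
    have "sqrt (2 powr (-\<gamma>)) = 2 powr (-\<gamma>/2)"
      by (simp add: powr_half_sqrt[symmetric] powr_powr)
    thus ?thesis by (simp add: real_sqrt_mult)
  qed
  finally have "sqrt (p*p) < 2 powr (-\<gamma>/2) * (sqrt a * sqrt b)" .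
  moreover have "sqrt (p*p) = p" using p by simp
  ultimately have "p \<le> 2 powr (-\<gamma>/2) * (sqrt a * sqrt b)" by (metis less_imp_le)
  thus ?thesis unfolding p_def a_def b_def .
qed

lemma det_bound:
  fixes P :: "('x::finite \<times> 'y::finite) pmf" and \<tau> :: "'x \<Rightarrow> 'y \<Rightarrow> 'k"
  assumes finK: "finite K" and inK: "\<And>x y. \<tau> x y \<in> K"
    and mix: "\<And>x y x' y'. \<tau> x y = \<tau> x' y' \<Longrightarrow> \<tau> x y' = \<tau> x y"
    and match: "\<And>x y x' y'. (x,y)\<in>C \<Longrightarrow> (x',y')\<in>C \<Longrightarrow> \<tau> x y = \<tau> x' y' \<Longrightarrow> (x = x' \<longleftrightarrow> y = y')"
  shows "(\<Sum>z\<in>C \<inter> {(x,y). h_sum P x y > \<gamma>}. pmf P z) \<le> 2 powr (-\<gamma>/2) * sqrt (card K)"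
proof -
  let ?H = "{(x,y). h_sum P x y > \<gamma>}"
  let ?g = "\<lambda>(x,y). sqrt (pmf (map_pmf fst P) x) * sqrt (pmf (map_pmf snd P) y)"
  have "(\<Sum>z\<in>C \<inter> ?H. pmf P z) \<le> (\<Sum>z\<in>C \<inter> ?H. 2 powr (-\<gamma>/2) * ?g z)"
  proof (rule sum_mono)
    fix z assume "z \<in> C \<inter> ?H"
    then obtain x y where z: "z = (x,y)" "h_sum P x y > \<gamma>" by auto
    show "pmf P z \<le> 2 powr (-\<gamma>/2) * ?g z" using pointwise[OF z(2)] unfolding z(1) by simp
  qed
  also have "\<dots> = 2 powr (-\<gamma>/2) * (\<Sum>z\<in>C \<inter> ?H. ?g z)"
    by (simp add: sum_distrib_left)
  finally have 1: "(\<Sum>z\<in>C \<inter> ?H. pmf P z) \<le> 2 powr (-\<gamma>/2) * (\<Sum>z\<in>C \<inter> ?H. ?g z)" .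
  have "(\<Sum>z\<in>C \<inter> ?H. ?g z) \<le> (\<Sum>z\<in>C. ?g z)"
    by (rule sum_mono2) (auto simp: case_prod_beta)
  also have "\<dots> \<le> sqrt (card K)"
    by (rule core[OF finK inK mix match]) auto
  finally have 2: "(\<Sum>z\<in>C \<inter> ?H. ?g z) \<le> sqrt (card K)" .
  have "2 powr (-\<gamma>/2) * (\<Sum>z\<in>C \<inter> ?H. ?g z) \<le> 2 powr (-\<gamma>/2) * sqrt (card K)"
    by (rule mult_left_mono[OF 2]) simp
  with 1 show ?thesis by linarith
qed



lemma slice_bound:
  fixes P :: "('x::finite \<times> 'y::finite) pmf" and t :: "('x \<times> 'ux \<times> 'u, 'y \<times> 'uy \<times> 'u) ptree"
    and \<gamma> :: real and Xhat :: "bool list \<Rightarrow> 'y \<times> 'uy \<times> 'u \<Rightarrow> 'x" and Yhat :: "bool list \<Rightarrow> 'x \<times> 'ux \<times> 'u \<Rightarrow> 'y"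
  defines "H \<equiv> {(x,y). h_sum P x y > \<gamma>}"
  shows "measure (measure_pmf P) {(x,y). Xhat (transcript t (x, ux, u) (y, uy, u)) (y, uy, u) = x \<and>
               Yhat (transcript t (x, ux, u) (y, uy, u)) (x, ux, u) = y}
         \<le> 2 powr (-\<gamma>/2) * sqrt (2 ^ ptree_depth t) + (1 - measure (measure_pmf P) H)"
proof -
  define \<tau> where "\<tau> x y = transcript t (x, ux, u) (y, uy, u)" for x y
  define Cw where "Cw = {(x,y). Xhat (\<tau> x y) (y, uy, u) = x \<and> Yhat (\<tau> x y) (x, ux, u) = y}"
  have m1: "measure (measure_pmf P) Cw \<le> measure (measure_pmf P) ((Cw \<inter> H) \<union> (UNIV - H))"
    by (rule measure_pmf.finite_measure_mono) auto
  have m2: "measure (measure_pmf P) ((Cw \<inter> H) \<union> (UNIV - H)) \<le> measure (measure_pmf P) (Cw \<inter> H) + measure (measure_pmf P) (UNIV - H)"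
    by (rule measure_Un_le) auto
  have m3: "measure (measure_pmf P) (UNIV - H) = 1 - measure (measure_pmf P) H"
    using measure_pmf.prob_compl[of H P] by simp
  have m4: "measure (measure_pmf P) (Cw \<inter> H) = (\<Sum>z\<in>Cw \<inter> H. pmf P z)"
    by (rule measure_measure_pmf_finite) simp
  have m5: "(\<Sum>z\<in>Cw \<inter> H. pmf P z) \<le> 2 powr (-\<gamma>/2) * sqrt (card (leaves t))"
    unfolding H_def
  proof (rule det_bound[where \<tau> = \<tau>])
    show "finite (leaves t)" by (rule finite_leaves)
    show "\<tau> x y \<in> leaves t" for x y unfolding \<tau>_def by (rule transcript_in_leaves)
    show "\<tau> x y' = \<tau> x y" if "\<tau> x y = \<tau> x' y'" for x y x' y'
      using that unfolding \<tau>_def by (rule transcript_mix)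
    show "(x = x') = (y = y')" if "(x, y) \<in> Cw" "(x', y') \<in> Cw" "\<tau> x y = \<tau> x' y'" for x y x' y'
    proof -
      have a: "Xhat (\<tau> x y) (y, uy, u) = x" "Yhat (\<tau> x y) (x, ux, u) = y"
        using that(1) unfolding Cw_def by simp_all
      have b: "Xhat (\<tau> x' y') (y', uy, u) = x'" "Yhat (\<tau> x' y') (x', ux, u) = y'"
        using that(2) unfolding Cw_def by simp_all
      show ?thesis
      proof
        assume "x = x'" thus "y = y'" using a(2) b(2) that(3) by metis
      next
        assume "y = y'" thus "x = x'" using a(1) b(1) that(3) by metis
      qed
    qed
  qed
  have m6: "2 powr (-\<gamma>/2) * sqrt (card (leaves t)) \<le> 2 powr (-\<gamma>/2) * sqrt (2 ^ ptree_depth t)"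
  proof -
    have "real (card (leaves t)) \<le> 2 ^ ptree_depth t"
      using card_leaves[of t] by (metis of_nat_le_iff of_nat_numeral of_nat_power)
    thus ?thesis by (intro mult_left_mono real_sqrt_le_mono) auto
  qed
  have "measure (measure_pmf P) Cw \<le> 2 powr (-\<gamma>/2) * sqrt (2 ^ ptree_depth t) + (1 - measure (measure_pmf P) H)"
    using m1 m2 m3 m4 m5 m6 by linarith
  thus ?thesis unfolding Cw_def \<tau>_def .
qed



lemma protocol_bound:
  fixes P :: "('x::finite \<times> 'y::finite) pmf" and t :: "('x \<times> 'ux \<times> 'u, 'y \<times> 'uy \<times> 'u) ptree"
    and MX :: "'ux measure" and MY :: "'uy measure" and MU :: "'u measure" and \<gamma> \<epsilon> :: real
  assumes pX: "prob_space MX" and pY: "prob_space MY" and pU: "prob_space MU"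
    and att: "attains_data_exchange P MX MY MU t \<epsilon>" and eps: "\<epsilon> < 1"
  shows "measure (measure_pmf P) {(x,y). h_sum P x y > \<gamma>} - \<epsilon> \<le> 2 powr (-\<gamma>/2) * sqrt (2 ^ ptree_depth t)"
proof -
  define H where "H = {(x,y). h_sum P x y > \<gamma>}"
  define B where "B = 2 powr (-\<gamma>/2) * sqrt (2 ^ ptree_depth t) + (1 - measure (measure_pmf P) H)"
  have B0: "B \<ge> 0" unfolding B_def
    using measure_pmf.prob_le_1[of P H] by (simp add: add_nonneg_nonneg)
  define R where "R = MX \<Otimes>\<^sub>M (MY \<Otimes>\<^sub>M MU)"
  define M where "M = measure_pmf P \<Otimes>\<^sub>M R"
  have pR: "prob_space R" unfolding R_def by (intro prob_space_pair pX pY pU)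
  interpret R: prob_space R by (rule pR)
  have ppr: "pair_prob_space (measure_pmf P) R"
    by (simp add: pair_prob_space_def pair_sigma_finite_def prob_space_imp_sigma_finite
        prob_space_measure_pmf pR)
  interpret PR: pair_prob_space "measure_pmf P" R by (rule ppr)
  from att obtain Yhat :: "bool list \<Rightarrow> 'x \<times> 'ux \<times> 'u \<Rightarrow> 'y"
      and Xhat :: "bool list \<Rightarrow> 'y \<times> 'uy \<times> 'u \<Rightarrow> 'x" where
    meas: "measure (protocol_space P MX MY MU)
          {\<omega> \<in> space (protocol_space P MX MY MU).
             case \<omega> of ((x, y), (ux, uy, u)) \<Rightarrow>
               Xhat (transcript t (x, ux, u) (y, uy, u)) (y, uy, u) = x \<and>
               Yhat (transcript t (x, ux, u) (y, uy, u)) (x, ux, u) = y}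
          \<ge> 1 - \<epsilon>"
    unfolding attains_data_exchange_def by blast
  define S where "S = {\<omega> \<in> space M.
             case \<omega> of ((x, y), (ux, uy, u)) \<Rightarrow>
               Xhat (transcript t (x, ux, u) (y, uy, u)) (y, uy, u) = x \<and>
               Yhat (transcript t (x, ux, u) (y, uy, u)) (x, ux, u) = y}"
  have PS: "protocol_space P MX MY MU = M" by (simp add: protocol_space_def M_def R_def)
  have mS: "measure M S \<ge> 1 - \<epsilon>" using meas unfolding PS S_def .
  have Sm: "S \<in> sets M"
  proof (rule ccontr)
    assume "S \<notin> sets M"
    hence "measure M S = 0" by (rule measure_notin_sets)
    with mS eps show False by simp
  qed
  have "emeasure M S = (\<integral>\<^sup>+\<omega>. emeasure (measure_pmf P) ((\<lambda>xy. (xy,\<omega>)) -` S) \<partial>R)"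
    unfolding M_def by (rule PR.emeasure_pair_measure_alt2) (use Sm in \<open>simp add: M_def\<close>)
  also have "\<dots> \<le> (\<integral>\<^sup>+\<omega>. ennreal B \<partial>R)"
  proof (rule nn_integral_mono)
    fix \<omega> assume w: "\<omega> \<in> space R"
    obtain ux uy u where wu: "\<omega> = (ux,uy,u)" by (cases \<omega>) auto
    have eq: "(\<lambda>xy. (xy,\<omega>)) -` S = {(x,y). Xhat (transcript t (x, ux, u) (y, uy, u)) (y, uy, u) = x \<and>
               Yhat (transcript t (x, ux, u) (y, uy, u)) (x, ux, u) = y}"
      using w unfolding S_def M_def wu by (auto simp: space_pair_measure)
    have "emeasure (measure_pmf P) ((\<lambda>xy. (xy,\<omega>)) -` S)
        = ennreal (measure (measure_pmf P) ((\<lambda>xy. (xy,\<omega>)) -` S))"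
      by (rule measure_pmf.emeasure_eq_measure)
    also have "\<dots> \<le> ennreal B"
      unfolding eq B_def H_def by (intro ennreal_leI slice_bound)
    finally show "emeasure (measure_pmf P) ((\<lambda>xy. (xy,\<omega>)) -` S) \<le> ennreal B" .
  qed
  also have "\<dots> = ennreal B" using R.emeasure_space_1 by simp
  finally have "emeasure M S \<le> ennreal B" .
  hence "measure M S \<le> B"
    unfolding M_def using B0 by (simp add: PR.P.emeasure_eq_measure)
  with mS show ?thesis unfolding B_def H_def by linarith
qed



lemma log2e_not_inf: "log2e x \<noteq> \<infinity>"
  by (simp add: log2e_def)

lemma log2e_pos: "x > 0 \<Longrightarrow> log2e x = ereal (log 2 x)"
  by (simp add: log2e_def)

lemma log2e_nonpos: "x \<le> 0 \<Longrightarrow> log2e x = -\<infinity>"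
  by (simp add: log2e_def)

theorem theorem3:
  fixes P :: "('x::finite \<times> 'y::finite) pmf"
    and lmin lmax \<Delta> \<epsilon> \<eta> \<gamma> :: real
  assumes "lmin < lmax" and "\<Delta> > 0"
    and "0 \<le> \<epsilon>" and "\<epsilon> < 1" and "0 < \<eta>" and "\<eta> < 1 - \<epsilon>"
    and "\<gamma> > 0"
  defines "N \<equiv> (lmax - lmin) / \<Delta>"
  defines "P\<gamma> \<equiv> measure_pmf.prob P {(x, y). h_sum P x y > \<gamma>}"
  shows "ereal \<gamma>
           + 3 * log2e (max (P\<gamma> - \<epsilon> - measure_pmf.prob P (T0 P lmin lmax) - 1 / N) 0)
           + log2e (1 - 2 * \<eta>) - ereal \<Delta> - ereal (6 * log 2 N)
           - ereal (4 * log 2 (1 / \<eta>)) - 1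
         \<le> L_eps P \<epsilon> TYPE('ux \<times> 'uy \<times> 'u)"
proof -
  define q where "q = max (P\<gamma> - \<epsilon> - measure_pmf.prob P (T0 P lmin lmax) - 1 / N) 0"
  define LHS where "LHS = ereal \<gamma> + 3 * log2e q
           + log2e (1 - 2 * \<eta>) - ereal \<Delta> - ereal (6 * log 2 N)
           - ereal (4 * log 2 (1 / \<eta>)) - 1"
  have Npos: "N > 0" unfolding N_def using assms(1,2) by simp
  have minf: "LHS = -\<infinity>" if "q \<le> 0 \<or> 1 - 2 * \<eta> \<le> 0"
  proof (cases "q \<le> 0")
    case True
    then show ?thesis unfolding LHS_def
      using log2e_not_inf[of "1 - 2 * \<eta>"]
      by (cases "log2e (1 - 2 * \<eta>)") (simp_all add: log2e_nonpos one_ereal_def)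
  next
    case False
    with that have "1 - 2 * \<eta> \<le> 0" by simp
    then show ?thesis unfolding LHS_def
      using log2e_not_inf[of q] by (cases "log2e q") (simp_all add: log2e_nonpos one_ereal_def)
  qed
  have "LHS \<le> L_eps P \<epsilon> TYPE('ux \<times> 'uy \<times> 'u)"
  proof (cases "q \<le> 0 \<or> 1 - 2 * \<eta> \<le> 0")
    case True
    then show ?thesis using minf by simp
  next
    case False
    hence q0: "q > 0" and e2: "1 - 2 * \<eta> > 0" by auto
    have qdef: "q = P\<gamma> - \<epsilon> - measure_pmf.prob P (T0 P lmin lmax) - 1 / N"
      using q0 unfolding q_def by (auto simp: max_def split: if_splits)
    have LHS_eq: "LHS = ereal (\<gamma> + 3 * log 2 q + log 2 (1 - 2 * \<eta>) - \<Delta> - 6 * log 2 N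
                      - 4 * log 2 (1 / \<eta>) - 1)"
      unfolding LHS_def using q0 e2 by (simp add: log2e_pos one_ereal_def)
    show ?thesis
      unfolding L_eps_def
    proof (rule Inf_greatest, clarify)
      fix t :: "('x \<times> 'ux \<times> 'u, 'y \<times> 'uy \<times> 'u) ptree"
        and MX :: "'ux measure" and MY :: "'uy measure" and MU :: "'u measure"
      assume "prob_space MX" "prob_space MY" "prob_space MU" "attains_data_exchange P MX MY MU t \<epsilon>"
      from protocol_bound[OF this assms(4), of \<gamma>]
      have pb: "P\<gamma> - \<epsilon> \<le> 2 powr (-\<gamma>/2) * sqrt (2 ^ ptree_depth t)"
        unfolding P\<gamma>_def .
      define D where "D = real (ptree_depth t)"
      have sq: "sqrt (2 ^ ptree_depth t) = 2 powr (D/2)"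
      proof -
        have e: "(2::real) ^ ptree_depth t = 2 powr D" unfolding D_def by (rule powr_realpow[symmetric]) simp
        have "sqrt (2 powr D) = (2 powr D) powr (1/2)" by (rule powr_half_sqrt[symmetric]) simp
        also have "\<dots> = 2 powr (D/2)" by (simp add: powr_powr)
        finally show ?thesis unfolding e .
      qed
      have "2 powr (-\<gamma>/2) * sqrt (2 ^ ptree_depth t) = 2 powr ((D - \<gamma>)/2)"
        unfolding sq by (simp add: powr_add[symmetric] diff_divide_distrib)
      with pb have pb2: "P\<gamma> - \<epsilon> \<le> 2 powr ((D - \<gamma>)/2)" by simp
      have T0nn: "measure_pmf.prob P (T0 P lmin lmax) \<ge> 0" by simp
      have iN: "1 / N > 0" using Npos by simp
      have qle: "q \<le> 2 powr ((D - \<gamma>)/2)" using pb2 qdef T0nn iN by linarith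
      have Pg1: "P\<gamma> \<le> 1" unfolding P\<gamma>_def by simp
      have q1: "q \<le> 1" using qdef Pg1 T0nn iN assms(3) by linarith
      have "log 2 q \<le> log 2 (2 powr ((D - \<gamma>)/2))" using qle q0 by (subst log_le_cancel_iff) auto
      hence lq: "log 2 q \<le> (D - \<gamma>)/2" by simp
      have lq0: "log 2 q \<le> 0" using q1 q0 by simp
      have "1 / N < 1" using qdef q0 Pg1 T0nn assms(3) by linarith
      hence N1: "N > 1" using Npos by (simp add: divide_less_eq)
      have lN: "log 2 N \<ge> 0" using N1 by simp
      have le2: "log 2 (1 - 2 * \<eta>) \<le> 0" using e2 assms(5) by simp
      have eta1: "\<eta> < 1" using assms(3,6) by simp
      have le3: "log 2 (1 / \<eta>) \<ge> 0" using eta1 assms(5) by simp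
      have "\<gamma> + 3 * log 2 q + log 2 (1 - 2 * \<eta>) - \<Delta> - 6 * log 2 N - 4 * log 2 (1 / \<eta>) - 1 \<le> D"
      proof -
        have a1: "2 * log 2 q \<le> D - \<gamma>" using lq by (simp add: field_simps)
        have a2: "3 * log 2 q \<le> 2 * log 2 q" using lq0 by simp
        have a3: "6 * log 2 N \<ge> 0" "4 * log 2 (1 / \<eta>) \<ge> 0" using lN le3 by simp_all
        show ?thesis using a1 a2 a3 le2 assms(2) by linarith
      qed
      thus "LHS \<le> ereal (real (ptree_depth t))" unfolding LHS_eq D_def by simp
    qed
  qed
  thus ?thesis unfolding LHS_def q_def .
qed


end
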